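(* Let $(\beta,\alpha)$ satisfy $\beta\in(1,2)$ and $\alpha\in[0,2-\beta]$, and let $f=T_{\beta,\alpha}$, $T_{\beta,\alpha}(x)=\beta x+\alpha \pmod 1$ on $[0,1]$, with critical point $c=\frac{1-\alpha}{\beta}$. Fix $a\in[0,\frac{1-\alpha}{\beta}]$ and for $b\in[c,1]$ consider the hole $H=(a,b)$ and the survivor set $S_f(H)=\{x\in[0,1]: f^n(x)\notin H\ \forall n\ge0\}$. Then the function $\eta_f(a): b\mapsto \dim_{\mathcal H}(S_f(H))$ is a devil staircase, that is, $\eta_f(a)$ is non-increasing and locally constant at Lebesgue-almost every point.
   Context: $\dim_{\mathcal H}$ denotes Hausdorff dimension. *)

theory Defs
  imports "HOL-Analysis.Analysis"
begin

definition diam_pow :: "real \<Rightarrow> real set \<Rightarrow> ennreal" where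
  "diam_pow s U = (if U = {} then 0 else if s = 0 then 1 else ennreal (diameter U powr s))"

definition hausdorff_pre :: "real \<Rightarrow> real \<Rightarrow> real set \<Rightarrow> ennreal" where
  "hausdorff_pre s \<delta> E =
     (INF U \<in> {U :: nat \<Rightarrow> real set. E \<subseteq> (\<Union>i. U i) \<and> (\<forall>i. diameter (U i) \<le> \<delta>)}.
        (\<Sum>i. diam_pow s (U i)))"

definition hausdorff_measure :: "real \<Rightarrow> real set \<Rightarrow> ennreal" where
  "hausdorff_measure s E = (SUP \<delta> \<in> {0<..}. hausdorff_pre s \<delta> E)"

definition hausdorff_dim :: "real set \<Rightarrow> real" where
  "hausdorff_dim E = Inf {s. s \<ge> 0 \<and> hausdorff_measure s E = 0}"

definition T_map :: "real \<Rightarrow> real \<Rightarrow> real \<Rightarrow> real" where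
  "T_map \<beta> \<alpha> x = frac (\<beta> * x + \<alpha>)"

definition survivor_set :: "(real \<Rightarrow> real) \<Rightarrow> real set \<Rightarrow> real set" where
  "survivor_set f H = {x \<in> {0..1}. \<forall>n. (f ^^ n) x \<notin> H}"

end

theory Submission
  imports Defs
begin

lemma hausdorff_pre_mono:
  assumes "E1 \<subseteq> E2" shows "hausdorff_pre s d E1 \<le> hausdorff_pre s d E2"
  unfolding hausdorff_pre_def
  by (rule INF_superset_mono) (use assms in auto)

lemma hausdorff_measure_mono:
  assumes "E1 \<subseteq> E2" shows "hausdorff_measure s E1 \<le> hausdorff_measure s E2"
  unfolding hausdorff_measure_def
  by (rule SUP_mono) (use hausdorff_pre_mono[OF assms] in auto)

lemma hausdorff_pre_2_zero:
  assumes E: "E \<subseteq> {0..1}" and d: "d > 0"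
  shows "hausdorff_pre 2 d E = 0"
proof -
  have "hausdorff_pre 2 d E \<le> 0 + ennreal e" if e: "e > 0" for e
  proof -
    obtain n :: nat where n: "n > max (1/d) (1/e)"
      using reals_Archimedean2 by blast
    have npos: "n > 0" using n d e
      by (metis gr_zeroI less_max_iff_disj of_nat_0 zero_less_divide_1_iff not_less_iff_gr_or_eq)
    have nd: "1 / real n \<le> d" using n d npos by (simp add: field_simps)
    have ne: "1 / real n < e" using n e npos by (simp add: field_simps)
    define U where "U = (\<lambda>i::nat. if i < n then {real i / n .. (real i + 1) / n} else {})"
    have cover: "E \<subseteq> (\<Union>i. U i)"
    proof
      fix x assume "x \<in> E"
      then have x: "0 \<le> x" "x \<le> 1" using E by auto
      define i where "i = min (nat \<lfloor>x * n\<rfloor>) (n - 1)"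
      have i: "i < n" using npos by (simp add: i_def)
      have "real i / n \<le> x"
      proof -
        have "real i \<le> real (nat \<lfloor>x * n\<rfloor>)" by (simp add: i_def)
        also have "\<dots> \<le> x * n" using x by (simp add: of_nat_nat)
        finally show ?thesis using npos by (simp add: field_simps)
      qed
      moreover have "x \<le> (real i + 1) / n"
      proof (cases "nat \<lfloor>x * n\<rfloor> \<le> n - 1")
        case True
        then have "i = nat \<lfloor>x * n\<rfloor>" by (simp add: i_def)
        moreover have "x * n < of_int \<lfloor>x * n\<rfloor> + 1" by (rule real_of_int_floor_add_one_gt)
        moreover have "real (nat \<lfloor>x * n\<rfloor>) = of_int \<lfloor>x * n\<rfloor>" using x by simp
        ultimately have "x * n \<le> real i + 1" by linarith
        then show ?thesis using npos by (simp add: field_simps)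
      next
        case False
        then have "i = n - 1" by (simp add: i_def)
        then have "real i + 1 = n" using npos by simp
        then show ?thesis using x npos by simp
      qed
      ultimately show "x \<in> (\<Union>i. U i)" using i by (auto simp: U_def)
    qed
    have diam: "diameter (U i) \<le> d" for i
      using nd npos d by (auto simp: U_def diff_divide_distrib[symmetric])
    have dp: "diam_pow 2 (U i) = (if i < n then ennreal ((1 / real n) powr 2) else 0)" for i
      using npos by (auto simp: U_def diam_pow_def add_divide_distrib)
    have "(\<Sum>i. diam_pow 2 (U i)) = (\<Sum>i<n. diam_pow 2 (U i))"
      by (rule suminf_finite) (auto simp: dp)
    also have "\<dots> = (\<Sum>i<n. ennreal ((1 / real n) powr 2))" by (simp add: dp)
    also have "\<dots> = ennreal (real n * (1 / real n) powr 2)"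
      by (simp add: ennreal_of_nat_eq_real_of_nat ennreal_mult)
    also have "real n * (1 / real n) powr 2 = 1 / real n"
      using npos by (simp add: powr_numeral power2_eq_square)
    finally have sum: "(\<Sum>i. diam_pow 2 (U i)) = ennreal (1 / real n)" .
    have "hausdorff_pre 2 d E \<le> (\<Sum>i. diam_pow 2 (U i))"
      unfolding hausdorff_pre_def by (rule INF_lower) (use cover diam in auto)
    also have "\<dots> \<le> ennreal e" using sum ne by (simp add: ennreal_leI)
    finally show ?thesis by simp
  qed
  then have "hausdorff_pre 2 d E \<le> 0" by (rule ennreal_le_epsilon) 
  then show ?thesis by simp
qed

lemma hausdorff_measure_2_zero:
  assumes E: "E \<subseteq> {0..1}" shows "hausdorff_measure 2 E = 0"
  unfolding hausdorff_measure_def using hausdorff_pre_2_zero[OF E] by simp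

lemma hausdorff_dim_mono:
  assumes "E1 \<subseteq> E2" "E2 \<subseteq> {0..1}"
  shows "hausdorff_dim E1 \<le> hausdorff_dim E2"
  unfolding hausdorff_dim_def
proof (rule cInf_superset_mono)
  show "{s. 0 \<le> s \<and> hausdorff_measure s E2 = 0} \<noteq> {}"
  proof -
    have "2 \<in> {s. 0 \<le> s \<and> hausdorff_measure s E2 = 0}"
      using hausdorff_measure_2_zero[OF assms(2)] by simp
    then show ?thesis by blast
  qed
  show "bdd_below {s. 0 \<le> s \<and> hausdorff_measure s E1 = 0}"
    by (rule bdd_belowI[of _ 0]) auto
  show "{s. 0 \<le> s \<and> hausdorff_measure s E2 = 0} \<subseteq> {s. 0 \<le> s \<and> hausdorff_measure s E1 = 0}"
  proof clarify
    fix s :: real assume "0 \<le> s" "hausdorff_measure s E2 = 0"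
    then show "hausdorff_measure s E1 = 0" using hausdorff_measure_mono[OF assms(1), of s] by simp
  qed
qed

locale lmo =
  fixes \<beta> \<alpha> :: real
  assumes b1: "1 < \<beta>" and b2: "\<beta> < 2" and a0: "0 \<le> \<alpha>" and a2: "\<alpha> \<le> 2 - \<beta>"
begin

definition c :: real where "c = (1 - \<alpha>) / \<beta>"

abbreviation f where "f \<equiv> T_map \<beta> \<alpha>"

lemma bpos: "0 < \<beta>" using b1 by simp

lemma mdiv: "(p::real) > 0 \<Longrightarrow> p * (x / p) = x" by simp

lemma mmin: "(p::real) > 0 \<Longrightarrow> p * min x y = min (p * x) (p * y)" by (simp add: min_def)

lemma bc: "\<beta> * c + \<alpha> = 1"
  using bpos by (simp add: c_def)

lemma c_pos: "0 < c"
  using b1 a2 by (simp add: c_def)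

lemma c_lt1: "c < 1"
  using b1 a0 by (simp add: c_def field_simps)

lemma f_range: "0 \<le> f x" "f x < 1"
  by (auto simp: T_map_def frac_lt_1)

lemma fL: assumes "0 \<le> y" "y < c" shows "f y = \<beta> * y + \<alpha>"
proof -
  have "\<beta> * y < \<beta> * c" using assms bpos by simp
  then have "\<beta> * y + \<alpha> < 1" using bc by linarith
  moreover have "0 \<le> \<beta> * y + \<alpha>" using assms bpos a0 by simp
  ultimately show ?thesis by (simp add: T_map_def frac_eq)
qed

lemma fR: assumes "c \<le> y" "y < 1" shows "f y = \<beta> * y + \<alpha> - 1"
proof -
  have "\<beta> * c \<le> \<beta> * y" using assms bpos by simp
  then have h1: "0 \<le> \<beta> * y + \<alpha> - 1" using bc by linarith
  have "\<beta> * y < \<beta>" using assms bpos by simp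
  then have h2: "\<beta> * y + \<alpha> - 1 < 1" using a2 by linarith
  have "f y = frac ((\<beta> * y + \<alpha> - 1) + 1)" by (simp add: T_map_def)
  also have "\<dots> = \<beta> * y + \<alpha> - 1" using h1 h2 by (simp only: frac_1_eq frac_eq)
  finally show ?thesis .
qed

lemma fn_range: "x \<in> {0..1} \<Longrightarrow> (f ^^ n) x \<in> {0..1}"
  by (induction n) (auto simp: less_imp_le f_range)

lemma fn_Suc: "(f ^^ Suc n) x = f ((f ^^ n) x)" by simp

lemma affine_nbhd:
  assumes b: "b \<in> {0..1}" and av: "\<forall>k<n. (f ^^ k) b \<noteq> c \<and> (f ^^ k) b \<noteq> 1"
  shows "\<exists>e>0. \<forall>y\<in>{0..1}. \<bar>y - b\<bar> < e \<longrightarrow> (f ^^ n) y = (f ^^ n) b + \<beta> ^ n * (y - b)"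
  using av
proof (induction n)
  case 0
  then show ?case by (intro exI[of _ 1]) auto
next
  case (Suc n)
  then obtain e where e: "e > 0" and he: "\<forall>y\<in>{0..1}. \<bar>y - b\<bar> < e \<longrightarrow> (f ^^ n) y = (f ^^ n) b + \<beta> ^ n * (y - b)"
    by auto
  define z where "z = (f ^^ n) b"
  have z01: "z \<in> {0..1}" unfolding z_def using fn_range b by blast
  have zc: "z \<noteq> c" "z \<noteq> 1" using Suc.prems unfolding z_def by auto
  have bnpos: "\<beta> ^ n > 0" using bpos by simp
  show ?case
  proof (cases "z < c")
    case True
    define e' where "e' = min e ((c - z) / \<beta> ^ n)"
    have e'pos: "e' > 0" using e True bnpos by (simp add: e'_def)
    show ?thesis
    proof (intro exI[of _ e'] conjI e'pos ballI impI)
      fix y assume y: "y \<in> {0..1}" "\<bar>y - b\<bar> < e'"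
      have w: "(f ^^ n) y = z + \<beta> ^ n * (y - b)" using he y e'_def z_def by auto
      have "\<beta> ^ n * (y - b) < \<beta> ^ n * ((c - z) / \<beta> ^ n)"
        using y bnpos unfolding e'_def by (intro mult_strict_left_mono) auto
      then have "\<beta> ^ n * (y - b) < c - z" using mdiv[OF bnpos] by simp
      then have wc: "(f ^^ n) y < c" using w by simp
      have w0: "0 \<le> (f ^^ n) y" using fn_range y(1) by auto
      have P: "(f ^^ Suc n) y = \<beta> * (z + \<beta> ^ n * (y - b)) + \<alpha>"
      proof -
        have "(f ^^ Suc n) y = f ((f ^^ n) y)" by simp
        also have "\<dots> = \<beta> * (f ^^ n) y + \<alpha>" by (rule fL[OF w0 wc])
        also have "\<dots> = \<beta> * (z + \<beta> ^ n * (y - b)) + \<alpha>" by (simp only: w)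
        finally show ?thesis .
      qed
      have Q: "(f ^^ Suc n) b = \<beta> * z + \<alpha>" using fL z01 True z_def by simp
      show "(f ^^ Suc n) y = (f ^^ Suc n) b + \<beta> ^ Suc n * (y - b)"
        unfolding P Q by (simp add: algebra_simps)
    qed
  next
    case False
    then have zc': "c < z" using zc by simp
    have z1: "z < 1" using z01 zc by auto
    define e' where "e' = min e (min ((z - c) / \<beta> ^ n) ((1 - z) / \<beta> ^ n))"
    have e'pos: "e' > 0" using e zc' z1 bnpos by (simp add: e'_def)
    show ?thesis
    proof (intro exI[of _ e'] conjI e'pos ballI impI)
      fix y assume y: "y \<in> {0..1}" "\<bar>y - b\<bar> < e'"
      have w: "(f ^^ n) y = z + \<beta> ^ n * (y - b)" using he y e'_def z_def by auto
      have "\<bar>\<beta> ^ n * (y - b)\<bar> = \<beta> ^ n * \<bar>y - b\<bar>" using bnpos by (simp add: abs_mult)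
      also have "\<dots> < \<beta> ^ n * min ((z - c) / \<beta> ^ n) ((1 - z) / \<beta> ^ n)"
        using y bnpos unfolding e'_def by (intro mult_strict_left_mono) auto
      also have "\<dots> = min (\<beta> ^ n * ((z - c) / \<beta> ^ n)) (\<beta> ^ n * ((1 - z) / \<beta> ^ n))"
        by (rule mmin[OF bnpos])
      also have "\<dots> = min (z - c) (1 - z)" by (simp only: mdiv[OF bnpos])
      finally have "\<bar>\<beta> ^ n * (y - b)\<bar> < min (z - c) (1 - z)" .
      then have wc: "c \<le> (f ^^ n) y" "(f ^^ n) y < 1" using w by auto
      have P: "(f ^^ Suc n) y = \<beta> * (z + \<beta> ^ n * (y - b)) + \<alpha> - 1"
      proof -
        have "(f ^^ Suc n) y = f ((f ^^ n) y)" by simp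
        also have "\<dots> = \<beta> * (f ^^ n) y + \<alpha> - 1" by (rule fR[OF wc])
        also have "\<dots> = \<beta> * (z + \<beta> ^ n * (y - b)) + \<alpha> - 1" by (simp only: w)
        finally show ?thesis .
      qed
      have Q: "(f ^^ Suc n) b = \<beta> * z + \<alpha> - 1" using fR zc' z1 z_def by simp
      show "(f ^^ Suc n) y = (f ^^ Suc n) b + \<beta> ^ Suc n * (y - b)"
        unfolding P Q by (simp add: algebra_simps)
    qed
  qed
qed

lemma f_preimage_finite: "finite {y \<in> {0..1}. f y = w}"
proof -
  have "{y \<in> {0..1}. f y = w} \<subseteq> (\<lambda>k::int. (w + of_int k - \<alpha>) / \<beta>) ` {0..2}"
  proof
    fix y assume y: "y \<in> {y \<in> {0..1}. f y = w}"
    define k where "k = \<lfloor>\<beta> * y + \<alpha>\<rfloor>"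
    have "0 \<le> \<beta> * y + \<alpha>" using y bpos a0 by simp
    then have k0: "0 \<le> k" unfolding k_def by simp
    have "\<beta> * y \<le> \<beta>" using y bpos by simp
    then have "\<beta> * y + \<alpha> \<le> 2" using a2 by simp
    then have k2: "k \<le> 2" unfolding k_def by (simp add: floor_le_iff)
    have "w = \<beta> * y + \<alpha> - of_int k" using y by (simp add: T_map_def k_def frac_def)
    then have "y = (w + of_int k - \<alpha>) / \<beta>" using bpos by (simp add: field_simps)
    then show "y \<in> (\<lambda>k::int. (w + of_int k - \<alpha>) / \<beta>) ` {0..2}" using k0 k2 by auto
  qed
  then show ?thesis by (rule finite_subset) simp
qed

lemma fn_preimage_finite: "finite F \<Longrightarrow> finite {y \<in> {0..1}. (f ^^ k) y \<in> F}"
proof (induction k arbitrary: F)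
  case 0
  then show ?case by (auto intro: finite_subset[of _ F])
next
  case (Suc k)
  define Fk where "Fk = {w \<in> {0..1}. (f ^^ k) w \<in> F}"
  have fin: "finite Fk" using Suc unfolding Fk_def by blast
  have "{y \<in> {0..1}. (f ^^ Suc k) y \<in> F} \<subseteq> (\<Union>w\<in>Fk. {y \<in> {0..1}. f y = w})"
  proof
    fix y assume y: "y \<in> {y \<in> {0..1}. (f ^^ Suc k) y \<in> F}"
    have "f y \<in> {0..1}" using f_range less_imp_le by auto
    moreover have "(f ^^ k) (f y) \<in> F"
    proof -
      have "f ((f ^^ k) y) \<in> F" using y by simp
      then show ?thesis by (simp only: funpow_swap1)
    qed
    ultimately show "y \<in> (\<Union>w\<in>Fk. {y \<in> {0..1}. f y = w})" using y Fk_def by auto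
  qed
  then show ?case using fin f_preimage_finite by (meson finite_UN_I finite_subset)
qed

definition D :: "real set" where "D = {y \<in> {0..1}. \<exists>k. (f ^^ k) y \<in> {c, 1}}"

lemma D_countable: "countable D"
proof -
  have "D = (\<Union>k. {y \<in> {0..1}. (f ^^ k) y \<in> {c, 1}})" by (auto simp: D_def)
  moreover have "countable {y \<in> {0..1}. (f ^^ k) y \<in> {c, 1}}" for k
    by (rule countable_finite, rule fn_preimage_finite) simp
  then have "countable (\<Union>k. {y \<in> {0..1}. (f ^^ k) y \<in> {c, 1}})"
    by (rule countable_UN[OF countableI_type])
  ultimately show ?thesis by simp
qed

lemma surv_fwd: assumes "y \<in> survivor_set f H" shows "(f ^^ n) y \<in> survivor_set f H"
proof -
  have y: "y \<in> {0..1}" "\<And>k. (f ^^ k) y \<notin> H" using assms by (auto simp: survivor_set_def)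
  have "(f ^^ k) ((f ^^ n) y) \<notin> H" for k
    using y(2)[of "k + n"] by (simp add: funpow_add)
  then show ?thesis using fn_range[OF y(1)] by (auto simp: survivor_set_def)
qed

lemma loc_const:
  assumes b: "b \<in> {0..1}" and ab: "a < b"
    and hit: "(f ^^ n) b \<in> {a<..<b}" and av: "\<forall>k<n. (f ^^ k) b \<noteq> c \<and> (f ^^ k) b \<noteq> 1"
  shows "\<exists>e>0. \<forall>y\<in>{0..1}. \<bar>y - b\<bar> < e \<longrightarrow> survivor_set f {a<..<y} = survivor_set f {a<..<b}"
proof -
  obtain e where e: "e > 0" and he: "\<forall>y\<in>{0..1}. \<bar>y - b\<bar> < e \<longrightarrow> (f ^^ n) y = (f ^^ n) b + \<beta> ^ n * (y - b)"
    using affine_nbhd[OF b av] by auto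
  define z where "z = (f ^^ n) b"
  have bnpos: "\<beta> ^ n > 0" using bpos by simp
  define e' where "e' = min e (min ((z - a) / \<beta> ^ n) ((b - z) / (\<beta> ^ n + 1)))"
  have e'pos: "e' > 0" using e hit bnpos by (simp add: e'_def z_def add_pos_pos)
  have key: "a < (f ^^ n) y \<and> (f ^^ n) y < b - e'" if y: "y \<in> {0..1}" "\<bar>y - b\<bar> < e'" for y
  proof -
    have w: "(f ^^ n) y = z + \<beta> ^ n * (y - b)" using he y e'_def z_def by auto
    have "\<bar>\<beta> ^ n * (y - b)\<bar> = \<beta> ^ n * \<bar>y - b\<bar>" using bnpos by (simp add: abs_mult)
    also have "\<dots> \<le> \<beta> ^ n * e'" using y bnpos by simp
    finally have A: "\<bar>\<beta> ^ n * (y - b)\<bar> \<le> \<beta> ^ n * e'" .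
    have "e' \<le> (z - a) / \<beta> ^ n" by (simp add: e'_def)
    then have "\<beta> ^ n * e' \<le> \<beta> ^ n * ((z - a) / \<beta> ^ n)"
      by (rule mult_left_mono) (use bnpos in auto)
    then have B: "\<beta> ^ n * e' \<le> z - a" using mdiv[OF bnpos] by auto
    have "(\<beta> ^ n + 1) * e' \<le> (\<beta> ^ n + 1) * ((b - z) / (\<beta> ^ n + 1))"
      using bnpos unfolding e'_def by (intro mult_left_mono) auto
    then have C: "(\<beta> ^ n + 1) * e' \<le> b - z" using mdiv[of "\<beta> ^ n + 1"] bnpos by simp
    have "\<beta> ^ n * \<bar>y - b\<bar> < \<beta> ^ n * e'" using y bnpos by simp
    then have "\<bar>\<beta> ^ n * (y - b)\<bar> < \<beta> ^ n * e'" using bnpos by (simp add: abs_mult)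
    then show ?thesis using w B C by (auto simp: algebra_simps)
  qed
  show ?thesis
  proof (intro exI[of _ e'] conjI e'pos ballI impI)
    fix y assume y: "y \<in> {0..1}" "\<bar>y - b\<bar> < e'"
    show "survivor_set f {a<..<y} = survivor_set f {a<..<b}"
    proof
      show "survivor_set f {a<..<y} \<subseteq> survivor_set f {a<..<b}"
      proof
        fix x assume x: "x \<in> survivor_set f {a<..<y}"
        have "(f ^^ k) x \<notin> {a<..<b}" for k
        proof
          assume wk: "(f ^^ k) x \<in> {a<..<b}"
          have "(f ^^ k) x \<notin> {a<..<y}" using x by (auto simp: survivor_set_def)
          then have "y \<le> (f ^^ k) x" using wk by auto
          then have cl: "\<bar>(f ^^ k) x - b\<bar> < e'" using wk y by auto
          have w01: "(f ^^ k) x \<in> {0..1}" using x fn_range by (auto simp: survivor_set_def)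
          have "(f ^^ (n + k)) x = (f ^^ n) ((f ^^ k) x)" by (simp add: funpow_add)
          then have "(f ^^ (n + k)) x \<in> {a<..<y}" using key[OF w01 cl] y by auto
          then show False using x by (auto simp: survivor_set_def)
        qed
        then show "x \<in> survivor_set f {a<..<b}" using x by (auto simp: survivor_set_def)
      qed
    next
      show "survivor_set f {a<..<b} \<subseteq> survivor_set f {a<..<y}"
      proof
        fix x assume x: "x \<in> survivor_set f {a<..<b}"
        have "(f ^^ k) x \<notin> {a<..<y}" for k
        proof
          assume wk: "(f ^^ k) x \<in> {a<..<y}"
          have "(f ^^ k) x \<notin> {a<..<b}" using x by (auto simp: survivor_set_def)
          then have "b \<le> (f ^^ k) x" using wk by auto
          then have cl: "\<bar>(f ^^ k) x - b\<bar> < e'" using wk y by auto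
          have w01: "(f ^^ k) x \<in> {0..1}" using x fn_range by (auto simp: survivor_set_def)
          have "(f ^^ (n + k)) x = (f ^^ n) ((f ^^ k) x)" by (simp add: funpow_add)
          then have "(f ^^ (n + k)) x \<in> {a<..<b}" using key[OF w01 cl] y e'pos by auto
          then show False using x by (auto simp: survivor_set_def)
        qed
        then show "x \<in> survivor_set f {a<..<y}" using x by (auto simp: survivor_set_def)
      qed
    qed
  qed
qed

end

context lmo begin

lemma f_meas: "f \<in> borel_measurable borel"
  unfolding T_map_def[abs_def] frac_def by measurable

lemma fn_meas: "(f ^^ n) \<in> borel_measurable borel"
proof (induction n)
  case 0 then show ?case by simp
next
  case (Suc n)
  have "(f ^^ Suc n) = f \<circ> (f ^^ n)" by simp
  then show ?case using Suc f_meas by (simp add: measurable_comp)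
qed

lemma surv_borel: assumes "H \<in> sets borel" shows "survivor_set f H \<in> sets borel"
proof -
  have "survivor_set f H = {0..1} \<inter> (\<Inter>n. (f ^^ n) -` (- H))"
    by (auto simp: survivor_set_def)
  moreover have "(f ^^ n) -` (- H) \<in> sets borel" for n
    using fn_meas assms by (intro measurable_sets_borel) auto
  ultimately show ?thesis by auto
qed

lemma borel_lebesgue: "X \<in> sets borel \<Longrightarrow> X \<in> sets lebesgue"
  by (simp add: sets_completionI_sets)

end

locale lmo_hole = lmo +
  fixes a b0 :: real
  assumes a_nn: "0 \<le> a" and ac: "a \<le> c" and cb: "c < b0"
begin

definition S where "S = survivor_set f {a<..<b0}"

lemma S_borel: "S \<in> sets borel" unfolding S_def by (rule surv_borel) simp

lemma S_leb: "S \<in> sets lebesgue" using S_borel borel_lebesgue by blast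

lemma S01: "S \<subseteq> {0..1}" by (auto simp: S_def survivor_set_def)

lemma S_fwd: "y \<in> S \<Longrightarrow> (f ^^ n) y \<in> S" unfolding S_def by (rule surv_fwd)

lemma S_hole: "y \<in> S \<Longrightarrow> y \<notin> {a<..<b0}"
  unfolding S_def survivor_set_def by (metis (mono_tags, lifting) funpow_0 mem_Collect_eq)

lemma diff_S_lmeas: "{u..v} - S \<in> lmeasurable"
proof -
  have "{u..v} - S \<in> sets lebesgue" using S_leb by (intro sets.Diff) auto
  moreover have "{u..v} \<in> lmeasurable" by simp
  ultimately show ?thesis using fmeasurableI2 Diff_subset by metis
qed

lemma affine_negl: fixes X :: "real set" assumes "negligible X" shows "negligible ((\<lambda>y. p * y + q) ` X)"
proof -
  have "((\<lambda>y. p * y + q) has_derivative (\<lambda>h. p * h)) (at x within X)" for x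
    by (auto intro!: derivative_eq_intros)
  then have d: "(\<lambda>y. p * y + q) differentiable_on X"
    by (auto simp: differentiable_on_def differentiable_def)
  show ?thesis by (rule negligible_differentiable_image_negligible[OF _ assms d]) simp
qed

lemma step_interval:
  assumes uv: "0 \<le> u" "u < v" "v \<le> 1" and neg: "negligible ({u..v} - S)"
  shows "\<exists>u' v'. 0 \<le> u' \<and> u' < v' \<and> v' \<le> 1 \<and> v' - u' = \<beta> * (v - u) \<and> negligible ({u'..v'} - S)"
proof -
  consider "v \<le> a" | "b0 \<le> u" | "u < b0" "a < v" by linarith
  then show ?thesis
  proof cases
    case 3
    have sub: "{max u a<..<min v b0} \<subseteq> {u..v} - S" using S_hole by auto
    have "negligible {max u a<..<min v b0}" using negligible_subset[OF neg sub] .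
    then have m0: "measure lebesgue {max u a<..<min v b0} = 0" by (rule negligible_imp_measure0)
    have lt: "max u a < min v b0" using 3 uv cb ac by auto
    then have "measure lebesgue {max u a<..<min v b0} = min v b0 - max u a" by simp
    then have False using m0 lt by linarith
    then show ?thesis ..
  next
    case 1
    define u' where "u' = \<beta> * u + \<alpha>"
    define v' where "v' = \<beta> * v + \<alpha>"
    have "\<beta> * v \<le> \<beta> * c" using 1 ac bpos by simp
    then have v'1: "v' \<le> 1" using bc by (simp add: v'_def)
    have u'0: "0 \<le> u'" using uv bpos a0 by (simp add: u'_def)
    have uv': "u' < v'" using uv bpos by (simp add: u'_def v'_def)
    have sub: "{u'..v'} - S \<subseteq> (\<lambda>y. \<beta> * y + \<alpha>) ` ({u..v} - S) \<union> {v'}"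
    proof
      fix t assume t: "t \<in> {u'..v'} - S"
      show "t \<in> (\<lambda>y. \<beta> * y + \<alpha>) ` ({u..v} - S) \<union> {v'}"
      proof (cases "t = v'")
        case False
        define y where "y = (t - \<alpha>) / \<beta>"
        have ty: "t = \<beta> * y + \<alpha>" using bpos by (simp add: y_def)
        have "u \<le> y" "y < v" using t False bpos by (auto simp: y_def u'_def v'_def field_simps)
        then have y: "0 \<le> y" "y < c" using uv 1 ac by auto
        have "y \<notin> S"
        proof
          assume "y \<in> S"
          then have "(f ^^ 1) y \<in> S" by (rule S_fwd)
          then have "t \<in> S" using fL[OF y] ty by simp
          then show False using t by simp
        qed
        then show ?thesis using ty \<open>u \<le> y\<close> \<open>y < v\<close> by auto
      qed simp
    qed
    have "negligible ((\<lambda>y. \<beta> * y + \<alpha>) ` ({u..v} - S) \<union> {v'})"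
      using affine_negl[OF neg] by (simp add: negligible_insert)
    then have "negligible ({u'..v'} - S)" using sub negligible_subset by blast
    moreover have "v' - u' = \<beta> * (v - u)" by (simp add: u'_def v'_def algebra_simps)
    ultimately show ?thesis using u'0 uv' v'1 by blast
  next
    case 2
    define u' where "u' = \<beta> * u + \<alpha> - 1"
    define v' where "v' = \<beta> * v + \<alpha> - 1"
    have "\<beta> * v \<le> \<beta>" using uv bpos by simp
    then have v'1: "v' \<le> 1" using a2 by (simp add: v'_def)
    have "\<beta> * c \<le> \<beta> * u" using 2 cb bpos by simp
    then have u'0: "0 \<le> u'" using bc by (simp add: u'_def)
    have uv': "u' < v'" using uv bpos by (simp add: u'_def v'_def)
    have sub: "{u'..v'} - S \<subseteq> (\<lambda>y. \<beta> * y + (\<alpha> - 1)) ` ({u..v} - S) \<union> {v'}"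
    proof
      fix t assume t: "t \<in> {u'..v'} - S"
      show "t \<in> (\<lambda>y. \<beta> * y + (\<alpha> - 1)) ` ({u..v} - S) \<union> {v'}"
      proof (cases "t = v'")
        case False
        define y where "y = (t + 1 - \<alpha>) / \<beta>"
        have ty: "t = \<beta> * y + (\<alpha> - 1)" using bpos by (simp add: y_def)
        have "u \<le> y" "y < v" using t False bpos by (auto simp: y_def u'_def v'_def field_simps)
        then have y: "c \<le> y" "y < 1" using uv 2 cb by auto
        have "y \<notin> S"
        proof
          assume "y \<in> S"
          then have "(f ^^ 1) y \<in> S" by (rule S_fwd)
          then have "t \<in> S" using fR[OF y] ty by (simp add: add_diff_eq)
          then show False using t by simp
        qed
        then show ?thesis using ty \<open>u \<le> y\<close> \<open>y < v\<close> by auto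
      qed simp
    qed
    have "negligible ((\<lambda>y. \<beta> * y + (\<alpha> - 1)) ` ({u..v} - S) \<union> {v'})"
      using affine_negl[OF neg] by (simp add: negligible_insert)
    then have "negligible ({u'..v'} - S)" using sub negligible_subset by blast
    moreover have "v' - u' = \<beta> * (v - u)" by (simp add: u'_def v'_def algebra_simps)
    ultimately show ?thesis using u'0 uv' v'1 by blast
  qed
qed

lemma L1: assumes uv: "0 \<le> u" "u < v" "v \<le> 1" shows "\<not> negligible ({u..v} - S)"
proof
  assume neg: "negligible ({u..v} - S)"
  have "\<exists>u' v'. 0 \<le> u' \<and> u' < v' \<and> v' \<le> 1 \<and> v' - u' = \<beta> ^ n * (v - u) \<and> negligible ({u'..v'} - S)" for n
  proof (induction n)
    case 0 then show ?case using uv neg by (intro exI[of _ u] exI[of _ v]) auto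
  next
    case (Suc n)
    then obtain u' v' where h: "0 \<le> u'" "u' < v'" "v' \<le> 1" "v' - u' = \<beta> ^ n * (v - u)" "negligible ({u'..v'} - S)"
      by blast
    from step_interval[OF h(1,2,3,5)] obtain u'' v'' where
      "0 \<le> u''" "u'' < v''" "v'' \<le> 1" "v'' - u'' = \<beta> * (v' - u')" "negligible ({u''..v''} - S)" by blast
    then show ?case using h(4) by (intro exI[of _ u''] exI[of _ v'']) auto
  qed
  note ex = this
  obtain n where "1 / (v - u) < \<beta> ^ n" using real_arch_pow[OF b1] by blast
  then have gt: "1 < \<beta> ^ n * (v - u)" using uv by (simp add: field_simps)
  from ex[of n] obtain u' v' where "0 \<le> u'" "v' \<le> 1" "v' - u' = \<beta> ^ n * (v - u)" by blast
  then show False using gt by linarith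
qed

lemma pos_measure: assumes "0 \<le> u" "u < v" "v \<le> 1" shows "measure lebesgue ({u..v} - S) > 0"
proof -
  have "measure lebesgue ({u..v} - S) \<noteq> 0"
    using L1[OF assms] negligible_iff_measure0[OF diff_S_lmeas] by blast
  then show ?thesis using measure_nonneg[of lebesgue] by (simp add: less_le)
qed

end

lemma density_negligible:
  fixes T :: "real set" and \<theta> :: real
  assumes T: "T \<in> lmeasurable" and th: "0 \<le> \<theta>" "\<theta> < 1"
    and dens: "\<And>x d. x \<in> T \<Longrightarrow> d > 0 \<Longrightarrow> \<exists>h. 0 < h \<and> h < d \<and> measure lebesgue (T \<inter> {x-h..x}) \<le> \<theta> * h"
  shows "negligible T"
proof -
  let ?\<mu> = "measure lebesgue"
  have Tl: "T \<in> sets lebesgue" using T by (simp add: fmeasurable_def)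
  have main: "?\<mu> T \<le> \<theta> * ?\<mu> T + e" if e: "e > 0" for e
  proof -
    obtain U where U: "open U" "T \<subseteq> U" "U - T \<in> lmeasurable" "emeasure lebesgue (U - T) < ennreal e"
      using sets_lebesgue_outer_open[OF Tl e] by metis
    have UT: "U = T \<union> (U - T)" using U by auto
    have Ul: "U \<in> lmeasurable" using U(3) T by (subst UT) (rule fmeasurable.Un)
    have "?\<mu> (U - T) < e"
      using U(3,4) e by (simp add: emeasure_eq_measure2 ennreal_less_iff)
    moreover have "?\<mu> U \<le> ?\<mu> T + ?\<mu> (U - T)"
      using Tl U(3) by (subst UT) (intro measure_Un_le, auto simp: fmeasurable_def)
    ultimately have muU: "?\<mu> U \<le> ?\<mu> T + e" by linarith
    define K where "K = {(x,h). x \<in> T \<and> 0 < h \<and> {x-h..x} \<subseteq> U \<and> ?\<mu> (T \<inter> {x-h..x}) \<le> \<theta> * h}"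
    define ctr where "ctr = (\<lambda>i::real\<times>real. fst i - snd i / 2)"
    define rad where "rad = (\<lambda>i::real\<times>real. snd i / 2)"
    have cb: "cball (ctr i) (rad i) = {fst i - snd i .. fst i}" for i
      by (simp add: cball_eq_atLeastAtMost ctr_def rad_def)
    obtain C where C: "countable C" "C \<subseteq> K"
      "pairwise (\<lambda>i j. disjnt (cball (ctr i) (rad i)) (cball (ctr j) (rad j))) C"
      "negligible (T - (\<Union>i \<in> C. cball (ctr i) (rad i)))"
    proof (rule Vitali_covering_theorem_cballs[of K rad T ctr])
      show "\<And>i. i \<in> K \<Longrightarrow> 0 < rad i" by (auto simp: K_def rad_def)
      fix x d assume x: "x \<in> T" and d: "0 < (d::real)"
      obtain \<rho> where rho: "\<rho> > 0" "ball x \<rho> \<subseteq> U" using U(1,2) x openE by blast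
      obtain h where h: "0 < h" "h < min d \<rho>" "?\<mu> (T \<inter> {x-h..x}) \<le> \<theta> * h"
        using dens[OF x, of "min d \<rho>"] d rho by auto
      have "{x-h..x} \<subseteq> ball x \<rho>" using h by (auto simp: dist_real_def)
      then have "(x,h) \<in> K" using h x rho by (auto simp: K_def)
      moreover have "x \<in> cball (ctr (x,h)) (rad (x,h))" using h by (simp add: cb)
      moreover have "rad (x,h) < d" using h by (simp add: rad_def)
      ultimately show "\<exists>i. i \<in> K \<and> x \<in> cball (ctr i) (rad i) \<and> rad i < d" by blast
    qed auto
    define B where "B = (\<lambda>i::real\<times>real. {fst i - snd i .. fst i})"
    have C3: "pairwise (\<lambda>i j. disjnt (B i) (B j)) C" using C(3) by (simp add: cb B_def)
    have C4: "negligible (T - (\<Union>i \<in> C. B i))" using C(4) by (simp add: cb B_def)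
    have BK: "B i \<subseteq> U \<and> ?\<mu> (T \<inter> B i) \<le> \<theta> * snd i \<and> 0 < snd i" if "i \<in> C" for i
    proof -
      obtain x h where i: "i = (x,h)" by fastforce
      have "(x,h) \<in> K" using that C(2) i by auto
      then show ?thesis using i by (simp add: K_def B_def)
    qed
    have muB: "?\<mu> (B i) = snd i" if "i \<in> C" for i
    proof -
      have "0 < snd i" using BK[OF that] by simp
      then show ?thesis by (simp add: B_def)
    qed
    have TBl: "T \<inter> B i \<in> lmeasurable" for i
      using T by (intro fmeasurable.Int) (auto simp: B_def)
    have bound: "?\<mu> (\<Union>i\<in>I. T \<inter> B i) \<le> \<theta> * ?\<mu> U" if I: "I \<subseteq> C" "finite I" for I
    proof -
      have "?\<mu> (\<Union>i\<in>I. T \<inter> B i) \<le> (\<Sum>i\<in>I. ?\<mu> (T \<inter> B i))"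
        using TBl by (intro measure_UNION_le I(2)) (auto simp: fmeasurable_def)
      also have "\<dots> \<le> (\<Sum>i\<in>I. \<theta> * ?\<mu> (B i))"
        using BK muB I by (intro sum_mono) auto
      also have "\<dots> = \<theta> * (\<Sum>i\<in>I. ?\<mu> (B i))" by (simp add: sum_distrib_left)
      also have "(\<Sum>i\<in>I. ?\<mu> (B i)) = ?\<mu> (\<Union>i\<in>I. B i)"
        using C3 I by (intro measure_UNION'[symmetric]) (auto simp: B_def elim: pairwise_subset)
      also have "?\<mu> (\<Union>i\<in>I. B i) \<le> ?\<mu> U"
        using I BK Ul by (intro measure_mono_fmeasurable) (auto simp: B_def)
      finally show ?thesis using th by (simp add: mult_left_mono)
    qed
    define V where "V = (\<Union>i\<in>C. T \<inter> B i)"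
    have Vl: "V \<in> lmeasurable" unfolding V_def
      by (rule fmeasurable_UN_bound[OF C(1) _ bound]) (use TBl in auto)
    have muV: "?\<mu> V \<le> \<theta> * ?\<mu> U" unfolding V_def
      by (rule measure_UN_bound[OF C(1) _ bound]) (use TBl in auto)
    have TV: "T \<subseteq> V \<union> (T - (\<Union>i \<in> C. B i))" by (auto simp: V_def)
    have "?\<mu> T \<le> ?\<mu> (V \<union> (T - (\<Union>i \<in> C. B i)))"
      using Vl C4 Tl by (intro measure_mono_fmeasurable[OF TV]) (auto intro: fmeasurable.Un negligible_imp_measurable)
    also have "\<dots> = ?\<mu> V"
      using Vl C4 by (intro measure_Un_null_set) (auto simp: fmeasurable_def negligible_iff_null_sets)
    also have "\<dots> \<le> \<theta> * (?\<mu> T + e)" using muV muU th by (meson mult_left_mono order_trans)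
    also have "\<dots> \<le> \<theta> * ?\<mu> T + e" using th e by (simp add: distrib_left)
    finally show ?thesis .
  qed
  have "?\<mu> T \<le> \<theta> * ?\<mu> T" by (rule field_le_epsilon) (rule main)
  then have "(1 - \<theta>) * ?\<mu> T \<le> 0" by (simp add: algebra_simps)
  then have "?\<mu> T \<le> 0" using th by (simp add: mult_le_0_iff)
  then have "?\<mu> T = 0" using measure_nonneg[of lebesgue T] by linarith
  then show ?thesis using negligible_iff_measure0[OF T] by simp
qed

lemma t1: fixes b m :: real assumes "b > 1" "m > 0" shows "b ^ n * (m / b ^ Suc n) = m / b"
proof -
  have bn: "b ^ n \<noteq> 0" using assms by simp
  have "b ^ n * (m / b ^ Suc n) = (m * b ^ n) / (b * b ^ n)" by (simp add: ac_simps)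
  also have "\<dots> = m / b" using bn by (rule nonzero_mult_divide_mult_cancel_right)
  finally show ?thesis .
qed
lemma t2: fixes b m :: real assumes "b > 1" "m > 0" shows "m / b \<le> m"
  using assms by (simp add: pos_divide_le_eq mult_le_cancel_left1)
lemma t3: fixes b m :: real assumes "b > 1" "m > 0" shows "m / b ^ Suc n \<le> m / b ^ n"
proof -
  have bn: "b ^ n > 0" using assms by simp
  have "b ^ n \<le> b ^ Suc n" using assms bn by simp
  then show ?thesis using assms bn by (intro divide_left_mono) auto
qed

lemma psi_aux: "(B::real) > 0 \<Longrightarrow> 1 / B * k + (x - z / B) = x - (z - k) / B"
  by (simp add: field_simps)

lemma aux2: "(B::real) > 0 \<Longrightarrow> m > 0 \<Longrightarrow> m / B - q / B = (1 - q / m) * (m / B)"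
proof -
  assume "B > 0" "m > 0"
  then have "(1 - q / m) * (m / B) = (m - q) / B" by (simp add: field_simps)
  then show ?thesis by (simp add: diff_divide_distrib)
qed

context lmo_hole begin

lemma L2: assumes m: "0 < m" "m \<le> 1"
  shows "\<exists>q>0. \<forall>t. m \<le> t \<longrightarrow> t \<le> 1 \<longrightarrow> q \<le> measure lebesgue ({t-m..t} - S)"
proof -
  define g where "g = (\<lambda>j::nat. measure lebesgue ({real j * m / 2 .. (real j + 1) * m / 2} - S))"
  define J where "J = {j::nat. (real j + 1) * m / 2 \<le> 1}"
  have "J \<subseteq> {..nat \<lceil>2 / m\<rceil>}"
  proof
    fix j assume "j \<in> J"
    then have "(real j + 1) * m \<le> 2" by (simp add: J_def)
    then have "real j \<le> 2 / m" using m by (simp add: field_simps)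
    then show "j \<in> {..nat \<lceil>2 / m\<rceil>}" by (simp add: le_nat_iff le_ceiling_iff)
  qed
  then have finJ: "finite J" by (rule finite_subset) simp
  have J0: "0 \<in> J" using m by (simp add: J_def)
  have gpos: "g j > 0" if "j \<in> J" for j
    unfolding g_def using that m by (intro pos_measure) (auto simp: J_def field_simps)
  define q where "q = Min (g ` J)"
  have qpos: "q > 0" unfolding q_def using finJ J0 gpos by (subst Min_gr_iff) auto
  have "q \<le> measure lebesgue ({t-m..t} - S)" if t: "m \<le> t" "t \<le> 1" for t
  proof -
    define j where "j = nat \<lceil>2 * (t - m) / m\<rceil>"
    have tm: "0 \<le> 2 * (t - m) / m" using t m by simp
    have cj: "real j = of_int \<lceil>2 * (t - m) / m\<rceil>" using tm by (simp add: j_def)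
    have j1: "2 * (t - m) / m \<le> real j" using ceiling_correct[of "2 * (t - m) / m"] cj by linarith
    have j2: "real j < 2 * (t - m) / m + 1" using ceiling_correct[of "2 * (t - m) / m"] cj by linarith
    have lo: "t - m \<le> real j * m / 2" using j1 m by (simp add: field_simps)
    have hi: "(real j + 1) * m / 2 < t" using j2 m by (simp add: field_simps)
    have jJ: "j \<in> J" using hi t by (simp add: J_def)
    have "q \<le> g j" unfolding q_def using finJ jJ by simp
    also have "g j \<le> measure lebesgue ({t-m..t} - S)" unfolding g_def
    proof (rule measure_mono_fmeasurable[OF _ _ diff_S_lmeas])
      show "{real j * m / 2..(real j + 1) * m / 2} - S \<subseteq> {t - m..t} - S" using lo hi by auto
      show "{real j * m / 2..(real j + 1) * m / 2} - S \<in> sets lebesgue"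
        using diff_S_lmeas fmeasurable_def by blast
    qed
    finally show ?thesis .
  qed
  then show ?thesis using qpos by blast
qed

lemma L3:
  assumes x: "x \<in> S" and av: "\<forall>k. (f ^^ k) x \<noteq> c \<and> (f ^^ k) x \<noteq> 1"
    and m: "0 < m" "m \<le> x" "m \<le> b0 - c"
  shows "m \<le> (f ^^ n) x \<and> (\<forall>y. x - m / \<beta> ^ n \<le> y \<longrightarrow> y \<le> x \<longrightarrow> (f ^^ n) y = (f ^^ n) x - \<beta> ^ n * (x - y))"
proof (induction n)
  case 0 show ?case using m by simp
next
  case (Suc n)
  define z where "z = (f ^^ n) x"
  have IH: "m \<le> z \<and> (\<forall>y. x - m / \<beta> ^ n \<le> y \<longrightarrow> y \<le> x \<longrightarrow> (f ^^ n) y = z - \<beta> ^ n * (x - y))"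
    using Suc.IH unfolding z_def .
  have IH1: "m \<le> z" using IH by (rule conjunct1)
  have IH2: "(f ^^ n) y = z - \<beta> ^ n * (x - y)" if "x - m / \<beta> ^ n \<le> y" "y \<le> x" for y
    using IH that by blast
  have zS: "z \<in> S" unfolding z_def by (rule S_fwd[OF x])
  have z01': "z \<in> {0..1}" using S01 zS by blast
  then have z01: "0 \<le> z" "z \<le> 1" by auto
  have zh: "z \<notin> {a<..<b0}" by (rule S_hole[OF zS])
  have zc: "z \<noteq> c" "z \<noteq> 1" using av unfolding z_def by blast+
  have bn: "\<beta> ^ n > 0" using bpos by simp
  have drange: "0 \<le> \<beta> ^ n * (x - y) \<and> \<beta> ^ n * (x - y) \<le> m / \<beta>" if "x - m / \<beta> ^ Suc n \<le> y" "y \<le> x" for y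
  proof -
    have "x - y \<le> m / \<beta> ^ Suc n" using that by simp
    then have "\<beta> ^ n * (x - y) \<le> \<beta> ^ n * (m / \<beta> ^ Suc n)" using bn by (intro mult_left_mono) auto
    also have "\<beta> ^ n * (m / \<beta> ^ Suc n) = m / \<beta>" using b1 m(1) by (rule t1)
    finally show ?thesis using that bn by simp
  qed
  have yrange: "x - m / \<beta> ^ n \<le> y" if "x - m / \<beta> ^ Suc n \<le> y" for y
  proof -
    have "m / \<beta> ^ Suc n \<le> m / \<beta> ^ n" using b1 m(1) by (rule t3)
    then show ?thesis using that by linarith
  qed
  have mb: "m / \<beta> \<le> m" using b1 m(1) by (rule t2)
  show ?case
  proof (cases "z \<le> a")
    case True
    then have zlt: "z < c" using ac zc by auto
    have fz: "(f ^^ Suc n) x = \<beta> * z + \<alpha>" using fL[OF z01(1) zlt] z_def by simp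
    have "z \<le> \<beta> * z" using mult_right_mono[of 1 \<beta> z] b1 z01 by simp
    then have mz: "m \<le> (f ^^ Suc n) x" using fz IH1 a0 by linarith
    show ?thesis
    proof (intro conjI allI impI mz)
      fix y assume y: "x - m / \<beta> ^ Suc n \<le> y" "y \<le> x"
      have w: "(f ^^ n) y = z - \<beta> ^ n * (x - y)" using IH2[OF yrange[OF y(1)] y(2)] .
      have w0: "0 \<le> (f ^^ n) y" using w drange[OF y] IH1 mb by linarith
      have wc: "(f ^^ n) y < c" using w drange[OF y] zlt by linarith
      have P: "(f ^^ Suc n) y = \<beta> * (z - \<beta> ^ n * (x - y)) + \<alpha>"
      proof -
        have "(f ^^ Suc n) y = f ((f ^^ n) y)" by simp
        also have "\<dots> = \<beta> * (f ^^ n) y + \<alpha>" by (rule fL[OF w0 wc])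
        also have "\<dots> = \<beta> * (z - \<beta> ^ n * (x - y)) + \<alpha>" by (simp only: w)
        finally show ?thesis .
      qed
      show "(f ^^ Suc n) y = (f ^^ Suc n) x - \<beta> ^ Suc n * (x - y)"
        unfolding P fz by (simp add: algebra_simps)
    qed
  next
    case False
    then have zb: "b0 \<le> z" using zh by auto
    have zc': "c \<le> z" using zb cb by simp
    have z1: "z < 1" using z01 zc by simp
    have fz: "(f ^^ Suc n) x = \<beta> * z + \<alpha> - 1" using fR[OF zc' z1] z_def by simp
    have e1: "\<beta> * z + \<alpha> - 1 = \<beta> * (z - c)" using bc by (simp add: right_diff_distrib)
    have "z - c \<le> \<beta> * (z - c)" using mult_right_mono[of 1 \<beta> "z - c"] b1 zc' by simp
    then have mz: "m \<le> (f ^^ Suc n) x" using fz e1 zb m by linarith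
    have bcb: "(b0 - c) / \<beta> \<le> b0 - c" using b1 cb by (intro t2) auto
    have mbc: "m / \<beta> \<le> (b0 - c) / \<beta>" using m bpos by (simp add: divide_right_mono)
    show ?thesis
    proof (intro conjI allI impI mz)
      fix y assume y: "x - m / \<beta> ^ Suc n \<le> y" "y \<le> x"
      have w: "(f ^^ n) y = z - \<beta> ^ n * (x - y)" using IH2[OF yrange[OF y(1)] y(2)] .
      have wc: "c \<le> (f ^^ n) y" using w drange[OF y] zb bcb mbc by linarith
      have w1: "(f ^^ n) y < 1" using w drange[OF y] z1 by linarith
      have P: "(f ^^ Suc n) y = \<beta> * (z - \<beta> ^ n * (x - y)) + \<alpha> - 1"
      proof -
        have "(f ^^ Suc n) y = f ((f ^^ n) y)" by simp
        also have "\<dots> = \<beta> * (f ^^ n) y + \<alpha> - 1" by (rule fR[OF wc w1])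
        also have "\<dots> = \<beta> * (z - \<beta> ^ n * (x - y)) + \<alpha> - 1" by (simp only: w)
        finally show ?thesis .
      qed
      show "(f ^^ Suc n) y = (f ^^ Suc n) x - \<beta> ^ Suc n * (x - y)"
        unfolding P fz by (simp add: algebra_simps)
    qed
  qed
qed

lemma L4:
  assumes x: "x \<in> S" and av: "\<forall>k. (f ^^ k) x \<noteq> c \<and> (f ^^ k) x \<noteq> 1"
    and m: "0 < m" "m \<le> x" "m \<le> b0 - c"
    and q: "\<forall>t. m \<le> t \<longrightarrow> t \<le> 1 \<longrightarrow> q \<le> measure lebesgue ({t-m..t} - S)"
  shows "measure lebesgue (S \<inter> {x - m / \<beta> ^ n..x}) \<le> (1 - q / m) * (m / \<beta> ^ n)"
proof -
  define h where "h = m / \<beta> ^ n"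
  have bn: "\<beta> ^ n > 0" using bpos by simp
  have hpos: "h > 0" using m bn by (simp add: h_def)
  define z where "z = (f ^^ n) x"
  have L3n: "m \<le> (f ^^ n) x \<and> (\<forall>y. x - m / \<beta> ^ n \<le> y \<longrightarrow> y \<le> x \<longrightarrow> (f ^^ n) y = (f ^^ n) x - \<beta> ^ n * (x - y))"
    by (rule L3[OF x av m])
  have L1: "m \<le> z" using L3n unfolding z_def by blast
  have L2: "(f ^^ n) y = z - \<beta> ^ n * (x - y)" if "x - h \<le> y" "y \<le> x" for y
    using L3n that unfolding z_def h_def by blast
  have zS: "z \<in> S" unfolding z_def by (rule S_fwd[OF x])
  have z1: "z \<le> 1" using zS S01 by auto
  have qK: "q \<le> measure lebesgue ({z-m..z} - S)" using q L1 z1 by blast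
  define \<psi> where "\<psi> = (\<lambda>k::real. (1 / \<beta> ^ n) *\<^sub>R k + (x - z / \<beta> ^ n))"
  have psi: "\<psi> k = x - (z - k) / \<beta> ^ n" for k
    unfolding \<psi>_def real_scaleR_def by (rule psi_aux[OF bn])
  have sub: "\<psi> ` ({z-m..z} - S) \<subseteq> {x-h..x} - S"
  proof
    fix t assume "t \<in> \<psi> ` ({z-m..z} - S)"
    then obtain k where k: "k \<in> {z-m..z}" "k \<notin> S" "t = \<psi> k" by blast
    have t: "t = x - (z - k) / \<beta> ^ n" using k(3) psi by simp
    have "(z - k) / \<beta> ^ n \<le> m / \<beta> ^ n" using k bn by (intro divide_right_mono) auto
    moreover have "0 \<le> (z - k) / \<beta> ^ n" using k bn by simp
    ultimately have tI: "t \<in> {x-h..x}" using t unfolding h_def by simp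
    have "(f ^^ n) t = z - \<beta> ^ n * (x - t)" using L2 tI by simp
    also have "x - t = (z - k) / \<beta> ^ n" using t by simp
    also have "\<beta> ^ n * ((z - k) / \<beta> ^ n) = z - k" by (rule mdiv[OF bn])
    finally have ft: "(f ^^ n) t = k" by simp
    have "t \<notin> S"
    proof
      assume "t \<in> S"
      then have "(f ^^ n) t \<in> S" by (rule S_fwd)
      then show False using ft k(2) by simp
    qed
    then show "t \<in> {x-h..x} - S" using tI by simp
  qed
  have "emeasure lebesgue (\<psi> ` ({z-m..z} - S)) = ennreal (\<bar>1 / \<beta> ^ n\<bar> ^ DIM(real)) * emeasure lebesgue ({z-m..z} - S)"
    unfolding \<psi>_def by (rule emeasure_lebesgue_affine)
  also have "\<dots> = ennreal (1 / \<beta> ^ n) * ennreal (measure lebesgue ({z-m..z} - S))"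
    using bn diff_S_lmeas by (simp add: emeasure_eq_measure2)
  also have "\<dots> = ennreal (1 / \<beta> ^ n * measure lebesgue ({z-m..z} - S))"
    by (rule ennreal_mult[symmetric]) (use bn in auto)
  finally have E1: "emeasure lebesgue (\<psi> ` ({z-m..z} - S)) = ennreal (1 / \<beta> ^ n * measure lebesgue ({z-m..z} - S))" .
  have "emeasure lebesgue (\<psi> ` ({z-m..z} - S)) \<le> emeasure lebesgue ({x-h..x} - S)"
    using sub diff_S_lmeas by (intro emeasure_mono) (auto simp: fmeasurable_def)
  also have "\<dots> = ennreal (measure lebesgue ({x-h..x} - S))" using diff_S_lmeas by (simp add: emeasure_eq_measure2)
  finally have "1 / \<beta> ^ n * measure lebesgue ({z-m..z} - S) \<le> measure lebesgue ({x-h..x} - S)"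
    using E1 by (simp add: ennreal_le_iff)
  then have low: "q / \<beta> ^ n \<le> measure lebesgue ({x-h..x} - S)"
  proof -
    have "q / \<beta> ^ n \<le> measure lebesgue ({z-m..z} - S) / \<beta> ^ n"
      using qK bn by (intro divide_right_mono) auto
    moreover have "1 / \<beta> ^ n * measure lebesgue ({z-m..z} - S) = measure lebesgue ({z-m..z} - S) / \<beta> ^ n"
      by simp
    ultimately show ?thesis using \<open>1 / \<beta> ^ n * measure lebesgue ({z-m..z} - S) \<le> measure lebesgue ({x-h..x} - S)\<close>
      by linarith
  qed
  have "S \<inter> {x-h..x} = {x-h..x} - ({x-h..x} - S)" by auto
  then have "measure lebesgue (S \<inter> {x-h..x}) = measure lebesgue {x-h..x} - measure lebesgue ({x-h..x} - S)"
    using diff_S_lmeas by (simp add: measurable_measure_Diff fmeasurable_def)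
  also have "measure lebesgue {x-h..x} = h" using hpos by simp
  finally have "measure lebesgue (S \<inter> {x-h..x}) \<le> h - q / \<beta> ^ n" using low by linarith
  also have "h - q / \<beta> ^ n = (1 - q / m) * h" unfolding h_def by (rule aux2[OF bn m(1)])
  finally show ?thesis by (simp add: h_def)
qed

end

context lmo_hole begin

lemma G_negl: assumes m0: "0 < m0"
  shows "negligible {x \<in> S. m0 \<le> x \<and> (\<forall>k. (f ^^ k) x \<noteq> c \<and> (f ^^ k) x \<noteq> 1)}"
proof -
  define G where "G = {x \<in> S. m0 \<le> x \<and> (\<forall>k. (f ^^ k) x \<noteq> c \<and> (f ^^ k) x \<noteq> 1)}"
  define m where "m = min m0 (min (b0 - c) 1)"
  have m: "0 < m" "m \<le> 1" "m \<le> b0 - c" "m \<le> m0" using m0 cb by (auto simp: m_def)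
  obtain q where q: "q > 0" "\<forall>t. m \<le> t \<longrightarrow> t \<le> 1 \<longrightarrow> q \<le> measure lebesgue ({t-m..t} - S)"
    using L2[OF m(1,2)] by blast
  have GS: "G \<subseteq> S" by (auto simp: G_def)
  have "G = S \<inter> {m0..} \<inter> (\<Inter>k. (f ^^ k) -` (- {c, 1}))" by (auto simp: G_def)
  moreover have "(f ^^ k) -` (- {c, 1}) \<in> sets borel" for k
    using fn_meas by (intro measurable_sets_borel) auto
  ultimately have "G \<in> sets borel" using S_borel by auto
  then have Gl: "G \<in> sets lebesgue" by (rule borel_lebesgue)
  have G01: "G \<subseteq> {0..1}" using GS S01 by auto
  have Gm: "G \<in> lmeasurable" by (rule fmeasurableI2[of "{0..1}"]) (use Gl G01 in auto)
  define \<theta> where "\<theta> = max 0 (1 - q / m)"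
  have th: "0 \<le> \<theta>" "\<theta> < 1" using q m by (auto simp: \<theta>_def)
  have "negligible G"
  proof (rule density_negligible[OF Gm th])
    fix x d assume x: "x \<in> G" and d: "(d::real) > 0"
    have xS: "x \<in> S" and av: "\<forall>k. (f ^^ k) x \<noteq> c \<and> (f ^^ k) x \<noteq> 1" and mx: "m \<le> x"
      using x m by (auto simp: G_def)
    have "1 / \<beta> < 1" using b1 by simp
    then obtain n where n: "(1 / \<beta>) ^ n < d / m" using real_arch_pow_inv[of "d / m" "1 / \<beta>"] d m by auto
    define h where "h = m / \<beta> ^ n"
    have bn: "\<beta> ^ n > 0" using bpos by simp
    have hpos: "0 < h" using m bn by (simp add: h_def)
    have "h = m * (1 / \<beta>) ^ n" by (simp add: h_def power_one_over)
    also have "\<dots> < m * (d / m)" using n m by (intro mult_strict_left_mono) auto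
    also have "\<dots> = d" using m by simp
    finally have hd: "h < d" .
    have "measure lebesgue (G \<inter> {x-h..x}) \<le> measure lebesgue (S \<inter> {x-h..x})"
    proof (rule measure_mono_fmeasurable)
      show "G \<inter> {x - h..x} \<subseteq> S \<inter> {x - h..x}" using GS by auto
      show "G \<inter> {x - h..x} \<in> sets lebesgue" using Gl by auto
      show "S \<inter> {x - h..x} \<in> lmeasurable"
        by (rule fmeasurableI2[of "{x-h..x}"]) (use S_leb in auto)
    qed
    also have "\<dots> \<le> (1 - q / m) * h" unfolding h_def by (rule L4[OF xS av m(1) mx m(3) q(2)])
    also have "\<dots> \<le> \<theta> * h" using hpos by (intro mult_right_mono) (auto simp: \<theta>_def)
    finally show "\<exists>h. 0 < h \<and> h < d \<and> measure lebesgue (G \<inter> {x-h..x}) \<le> \<theta> * h"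
      using hpos hd by blast
  qed
  then show ?thesis by (simp add: G_def)
qed

lemma S_null: "S \<in> null_sets lborel"
proof -
  define G where "G = (\<lambda>j::nat. {x \<in> S. 1 / real (Suc j) \<le> x \<and> (\<forall>k. (f ^^ k) x \<noteq> c \<and> (f ^^ k) x \<noteq> 1)})"
  have sub: "S \<subseteq> ({0} \<union> D) \<union> (\<Union>j. G j)"
  proof
    fix x assume xS: "x \<in> S"
    then have x01: "x \<in> {0..1}" using S01 by auto
    show "x \<in> ({0} \<union> D) \<union> (\<Union>j. G j)"
    proof (cases "x = 0 \<or> x \<in> D")
      case True then show ?thesis by auto
    next
      case False
      then have xpos: "0 < x" using x01 by auto
      have av: "\<forall>k. (f ^^ k) x \<noteq> c \<and> (f ^^ k) x \<noteq> 1" using False x01 by (auto simp: D_def)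
      obtain j where "inverse (real (Suc j)) < x" using reals_Archimedean[OF xpos] by blast
      then have "1 / real (Suc j) \<le> x" by (simp add: inverse_eq_divide)
      then have "x \<in> G j" using xS av by (simp add: G_def)
      then show ?thesis by blast
    qed
  qed
  have "{0} \<union> D \<in> null_sets lborel" using D_countable by (intro countable_imp_null_set_lborel) auto
  then have "{0} \<union> D \<in> null_sets lebesgue" by (rule null_sets_completionI)
  then have "negligible ({0} \<union> D)" by (simp add: negligible_iff_null_sets)
  moreover have "negligible (\<Union>j. G j)" unfolding G_def by (intro negligible_Union_nat G_negl) simp
  ultimately have "negligible S" using sub by (meson negligible_Un negligible_subset)
  then have "S \<in> null_sets lebesgue" by (simp add: negligible_iff_null_sets)
  moreover have "S \<in> sets lborel" using S_borel by simp
  ultimately show ?thesis using null_sets_completion_iff by blast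
qed

end

context lmo begin

lemma surv_null:
  assumes "0 \<le> a" "a \<le> c" "c < b0"
  shows "survivor_set f {a<..<b0} \<in> null_sets lborel"
proof -
  interpret H: lmo_hole \<beta> \<alpha> a b0 using assms b1 b2 a0 a2 by unfold_locales auto
  show ?thesis using H.S_null unfolding H.S_def .
qed

lemma AE_part:
  assumes a: "0 \<le> a" "a \<le> c"
  shows "AE b in lborel. b \<in> {c..1} \<longrightarrow> (\<exists>e>0. \<forall>y\<in>{c..1}. \<bar>y - b\<bar> < e \<longrightarrow>
            survivor_set f {a<..<y} = survivor_set f {a<..<b})"
proof (rule AE_I')
  define N where "N = ({c, 1} \<union> D) \<union> (\<Union>j::nat. survivor_set f {a<..<c + 1 / real (Suc j)})"
  have "{c, 1} \<union> D \<in> null_sets lborel" using D_countable by (intro countable_imp_null_set_lborel) auto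
  moreover have "(\<Union>j::nat. survivor_set f {a<..<c + 1 / real (Suc j)}) \<in> null_sets lborel"
    using a by (intro null_sets_UN surv_null) auto
  ultimately show "N \<in> null_sets lborel" unfolding N_def by (rule null_sets.Un)
  show "{b \<in> space lborel. \<not> (b \<in> {c..1} \<longrightarrow> (\<exists>e>0. \<forall>y\<in>{c..1}. \<bar>y - b\<bar> < e \<longrightarrow>
            survivor_set f {a<..<y} = survivor_set f {a<..<b}))} \<subseteq> N"
  proof (rule subsetI, rule ccontr)
    fix b assume b: "b \<in> {b \<in> space lborel. \<not> (b \<in> {c..1} \<longrightarrow> (\<exists>e>0. \<forall>y\<in>{c..1}. \<bar>y - b\<bar> < e \<longrightarrow>
            survivor_set f {a<..<y} = survivor_set f {a<..<b}))}" and bN: "b \<notin> N"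
    have bc: "b \<in> {c..1}" and nlc: "\<not> (\<exists>e>0. \<forall>y\<in>{c..1}. \<bar>y - b\<bar> < e \<longrightarrow>
            survivor_set f {a<..<y} = survivor_set f {a<..<b})" using b by auto
    have b01: "b \<in> {0..1}" using bc c_pos by auto
    have bcb: "c < b" "b < 1" using bc bN by (auto simp: N_def)
    have av: "\<forall>k. (f ^^ k) b \<noteq> c \<and> (f ^^ k) b \<noteq> 1" using bN b01 by (auto simp: N_def D_def)
    show False
    proof (cases "\<exists>n. (f ^^ n) b \<in> {a<..<b}")
      case True
      then obtain n where n: "(f ^^ n) b \<in> {a<..<b}" by blast
      have "a < b" using a bcb by simp
      from loc_const[OF b01 this n] av obtain e where e: "e > 0"
        "\<forall>y\<in>{0..1}. \<bar>y - b\<bar> < e \<longrightarrow> survivor_set f {a<..<y} = survivor_set f {a<..<b}" by blast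
      have "\<forall>y\<in>{c..1}. \<bar>y - b\<bar> < e \<longrightarrow> survivor_set f {a<..<y} = survivor_set f {a<..<b}"
        using e(2) c_pos by auto
      then show False using nlc e(1) by blast
    next
      case False
      obtain j where j: "inverse (real (Suc j)) < b - c" using reals_Archimedean bcb by (metis diff_gt_0_iff_gt)
      then have jb: "c + 1 / real (Suc j) \<le> b" by (simp add: inverse_eq_divide)
      have "b \<in> survivor_set f {a<..<c + 1 / real (Suc j)}"
        unfolding survivor_set_def using b01 False jb by auto
      then show False using bN by (auto simp: N_def)
    qed
  qed
qed

end

context lmo begin

lemma main_lmo:
  assumes a: "0 \<le> a" "a \<le> c"
  shows "(\<forall>b1 \<in> {c..1}. \<forall>b2 \<in> {c..1}. b1 \<le> b2 \<longrightarrow>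
            hausdorff_dim (survivor_set f {a<..<b2}) \<le> hausdorff_dim (survivor_set f {a<..<b1}))
       \<and> (AE b in lborel. b \<in> {c..1} \<longrightarrow>
            (\<exists>\<epsilon>>0. \<forall>y \<in> {c..1}. \<bar>y - b\<bar> < \<epsilon> \<longrightarrow>
               hausdorff_dim (survivor_set f {a<..<y}) = hausdorff_dim (survivor_set f {a<..<b})))"
proof
  show "\<forall>b1 \<in> {c..1}. \<forall>b2 \<in> {c..1}. b1 \<le> b2 \<longrightarrow>
            hausdorff_dim (survivor_set f {a<..<b2}) \<le> hausdorff_dim (survivor_set f {a<..<b1})"
  proof (intro ballI impI)
    fix b1 b2 :: real assume "b1 \<le> b2"
    then have "survivor_set f {a<..<b2} \<subseteq> survivor_set f {a<..<b1}"
      by (auto simp: survivor_set_def)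
    moreover have "survivor_set f {a<..<b1} \<subseteq> {0..1}" by (auto simp: survivor_set_def)
    ultimately show "hausdorff_dim (survivor_set f {a<..<b2}) \<le> hausdorff_dim (survivor_set f {a<..<b1})"
      by (rule hausdorff_dim_mono)
  qed
  show "AE b in lborel. b \<in> {c..1} \<longrightarrow>
            (\<exists>\<epsilon>>0. \<forall>y \<in> {c..1}. \<bar>y - b\<bar> < \<epsilon> \<longrightarrow>
               hausdorff_dim (survivor_set f {a<..<y}) = hausdorff_dim (survivor_set f {a<..<b}))"
  proof (rule eventually_mono[OF AE_part[OF a]])
    fix b assume h: "b \<in> {c..1} \<longrightarrow> (\<exists>e>0. \<forall>y\<in>{c..1}. \<bar>y - b\<bar> < e \<longrightarrow>
            survivor_set f {a<..<y} = survivor_set f {a<..<b})"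
    show "b \<in> {c..1} \<longrightarrow>
            (\<exists>\<epsilon>>0. \<forall>y \<in> {c..1}. \<bar>y - b\<bar> < \<epsilon> \<longrightarrow>
               hausdorff_dim (survivor_set f {a<..<y}) = hausdorff_dim (survivor_set f {a<..<b}))"
    proof
      assume "b \<in> {c..1}"
      then obtain e where e: "e > 0" "\<forall>y\<in>{c..1}. \<bar>y - b\<bar> < e \<longrightarrow>
            survivor_set f {a<..<y} = survivor_set f {a<..<b}" using h by blast
      show "\<exists>\<epsilon>>0. \<forall>y \<in> {c..1}. \<bar>y - b\<bar> < \<epsilon> \<longrightarrow>
               hausdorff_dim (survivor_set f {a<..<y}) = hausdorff_dim (survivor_set f {a<..<b})"
      proof (intro exI[of _ e] conjI ballI impI)
        show "e > 0" by (rule e(1))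
        fix y assume "y \<in> {c..1}" "\<bar>y - b\<bar> < e"
        then have "survivor_set f {a<..<y} = survivor_set f {a<..<b}" using e(2) by blast
        then show "hausdorff_dim (survivor_set f {a<..<y}) = hausdorff_dim (survivor_set f {a<..<b})" by simp
      qed
    qed
  qed
qed

end

theorem corollary1p4:
  fixes \<beta> \<alpha> a :: real
  assumes "1 < \<beta>" "\<beta> < 2" "0 \<le> \<alpha>" "\<alpha> \<le> 2 - \<beta>"
    and "0 \<le> a" "a \<le> (1 - \<alpha>) / \<beta>"
  defines "c \<equiv> (1 - \<alpha>) / \<beta>"
    and "\<eta> \<equiv> (\<lambda>b. hausdorff_dim (survivor_set (T_map \<beta> \<alpha>) {a<..<b}))"
  shows "(\<forall>b1 \<in> {c..1}. \<forall>b2 \<in> {c..1}. b1 \<le> b2 \<longrightarrow> \<eta> b2 \<le> \<eta> b1)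
       \<and> (AE b in lborel. b \<in> {c..1} \<longrightarrow>
            (\<exists>\<epsilon>>0. \<forall>y \<in> {c..1}. \<bar>y - b\<bar> < \<epsilon> \<longrightarrow> \<eta> y = \<eta> b))"
proof -
  have L: "lmo \<beta> \<alpha>" using assms(1-4) by unfold_locales
  have cc: "c = lmo.c \<beta> \<alpha>" unfolding c_def by (simp add: lmo.c_def[OF L])
  have a: "0 \<le> a" "a \<le> lmo.c \<beta> \<alpha>" using assms(5,6) cc c_def by auto
  have M: "(\<forall>b1 \<in> {lmo.c \<beta> \<alpha>..1}. \<forall>b2 \<in> {lmo.c \<beta> \<alpha>..1}. b1 \<le> b2 \<longrightarrow>
            hausdorff_dim (survivor_set (T_map \<beta> \<alpha>) {a<..<b2}) \<le> hausdorff_dim (survivor_set (T_map \<beta> \<alpha>) {a<..<b1}))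
       \<and> (AE b in lborel. b \<in> {lmo.c \<beta> \<alpha>..1} \<longrightarrow>
            (\<exists>\<epsilon>>0. \<forall>y \<in> {lmo.c \<beta> \<alpha>..1}. \<bar>y - b\<bar> < \<epsilon> \<longrightarrow>
               hausdorff_dim (survivor_set (T_map \<beta> \<alpha>) {a<..<y}) = hausdorff_dim (survivor_set (T_map \<beta> \<alpha>) {a<..<b})))"
    by (rule lmo.main_lmo[OF L a])
  show ?thesis unfolding \<eta>_def cc using M .
qed

end
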